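(* Let $p$ be a prime and let $Q\in\mathbb{Q}_p[X_1,\dots,X_n]$ be a nonsingular quadratic form which is isotropic over $\mathbb{Q}_p$. Then $R(Q(\mathbb{Z}_p^n))=\mathbb{Q}_p$. In particular, $R(Q(\mathbb{Z}^n))$ is dense in $\mathbb{Q}_p$.
   Context: A quadratic form $Q=\sum_{i,j}a_{ij}X_iX_j$ ($a_{ij}=a_{ji}$, not all zero) is nonsingular if $\det[a_{ij}]\neq 0$; it is isotropic over $\mathbb{Q}_p$ if $Q(\mathbf{x})=0$ for some nonzero $\mathbf{x}\in\mathbb{Q}_p^n$. $\mathbb{Z}_p$ denotes the $p$-adic integers. For a subset $A$ of a field, $R(A)=\{a/b: a,b\in A,\ b\neq 0\}$. For $S\subseteq\mathbb{Q}_p^n$, $Q(S)=\{Q(\mathbf{x}):\mathbf{x}\in S\}$. *)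

theory Defs
  imports "HOL-Analysis.Analysis" "HOL-Computational_Algebra.Computational_Algebra"
begin

text \<open>The p-adic numbers are modelled as the completion of the rationals with
respect to the p-adic absolute value: an element of Q_p is represented by a
p-adically Cauchy sequence of rationals, and two representatives denote the same
element iff their difference is a p-adic null sequence. All field operations act
pointwise on representatives. Z_p is the closure of Z, i.e. its elements are
represented by p-adically Cauchy sequences of integers.\<close>

definition padic_val :: "nat \<Rightarrow> rat \<Rightarrow> int" where
  "padic_val p r = (case quotient_of r of (a, b) \<Rightarrow>
      int (multiplicity (int p) a) - int (multiplicity (int p) b))"

definition padic_norm :: "nat \<Rightarrow> rat \<Rightarrow> real" where
  "padic_norm p r = (if r = 0 then 0 else real p powr (- real_of_int (padic_val p r)))"

definition pcauchy :: "nat \<Rightarrow> (nat \<Rightarrow> rat) \<Rightarrow> bool" where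
  "pcauchy p X \<longleftrightarrow> (\<forall>e>0. \<exists>N. \<forall>m\<ge>N. \<forall>k\<ge>N. padic_norm p (X m - X k) < e)"

definition pnull :: "nat \<Rightarrow> (nat \<Rightarrow> rat) \<Rightarrow> bool" where
  "pnull p X \<longleftrightarrow> (\<forall>e>0. \<exists>N. \<forall>k\<ge>N. padic_norm p (X k) < e)"

definition peq :: "nat \<Rightarrow> (nat \<Rightarrow> rat) \<Rightarrow> (nat \<Rightarrow> rat) \<Rightarrow> bool" where
  "peq p X Y \<longleftrightarrow> pnull p (\<lambda>k. X k - Y k)"

definition Qp :: "nat \<Rightarrow> (nat \<Rightarrow> rat) set" where
  "Qp p = {X. pcauchy p X}"

definition Zp :: "nat \<Rightarrow> (nat \<Rightarrow> rat) set" where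
  "Zp p = {X. pcauchy p X \<and> (\<forall>k. X k \<in> \<int>)}"

definition Qp_norm :: "nat \<Rightarrow> (nat \<Rightarrow> rat) \<Rightarrow> real" where
  "Qp_norm p X = lim (\<lambda>k. padic_norm p (X k))"

definition pdiv :: "(nat \<Rightarrow> rat) \<Rightarrow> (nat \<Rightarrow> rat) \<Rightarrow> (nat \<Rightarrow> rat)" where
  "pdiv X Y = (\<lambda>k. X k / Y k)"

definition qform :: "('n::finite \<Rightarrow> 'n \<Rightarrow> nat \<Rightarrow> rat) \<Rightarrow> ('n \<Rightarrow> nat \<Rightarrow> rat) \<Rightarrow> nat \<Rightarrow> rat" where
  "qform A x = (\<lambda>k. \<Sum>i\<in>UNIV. \<Sum>j\<in>UNIV. A i j k * x i k * x j k)"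

definition qdet :: "('n::finite \<Rightarrow> 'n \<Rightarrow> nat \<Rightarrow> rat) \<Rightarrow> nat \<Rightarrow> rat" where
  "qdet A = (\<lambda>k. det (\<chi> i j. A i j k))"

definition is_qform :: "nat \<Rightarrow> ('n::finite \<Rightarrow> 'n \<Rightarrow> nat \<Rightarrow> rat) \<Rightarrow> bool" where
  "is_qform p A \<longleftrightarrow> (\<forall>i j. A i j \<in> Qp p) \<and> (\<forall>i j. peq p (A i j) (A j i))
      \<and> (\<exists>i j. \<not> pnull p (A i j))"

definition nonsingular :: "nat \<Rightarrow> ('n::finite \<Rightarrow> 'n \<Rightarrow> nat \<Rightarrow> rat) \<Rightarrow> bool" where
  "nonsingular p A \<longleftrightarrow> \<not> pnull p (qdet A)"

definition isotropic :: "nat \<Rightarrow> ('n::finite \<Rightarrow> 'n \<Rightarrow> nat \<Rightarrow> rat) \<Rightarrow> bool" where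
  "isotropic p A \<longleftrightarrow> (\<exists>x. (\<forall>i. x i \<in> Qp p) \<and> (\<exists>i. \<not> pnull p (x i)) \<and> pnull p (qform A x))"

end

theory Submission
  imports Defs
begin

lemma rat_frac_obtain:
  fixes r :: rat
  obtains x y :: int where "r = of_int x / of_int y" "y > 0"
proof -
  obtain a b where q: "quotient_of r = (a, b)" by (cases "quotient_of r")
  show ?thesis using that[of a b] quotient_of_div[OF q] quotient_of_denom_pos[OF q] by auto
qed

lemma pval_frac:
  assumes p: "prime p" and x: "x \<noteq> 0" and y: "y \<noteq> 0"
  shows "padic_val p (of_int x / of_int y) =
     int (multiplicity (int p) x) - int (multiplicity (int p) y)"
proof -
  have pe: "prime_elem (int p)" using p by simp
  obtain a b where q: "quotient_of (of_int x / of_int y) = (a, b)"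
    by (cases "quotient_of (of_int x / of_int y)")
  have eq: "(of_int x / of_int y :: rat) = of_int a / of_int b" using quotient_of_div[OF q] .
  have b: "b > 0" using quotient_of_denom_pos[OF q] .
  have a: "a \<noteq> 0" using eq x y b by auto
  have "x * b = a * y"
  proof -
    have "(of_int x :: rat) * of_int b = of_int a * of_int y" using eq y b
      by (simp add: field_simps)
    then show ?thesis by (metis of_int_eq_iff of_int_mult)
  qed
  then have "multiplicity (int p) (x * b) = multiplicity (int p) (a * y)" by simp
  then have "multiplicity (int p) x + multiplicity (int p) b = multiplicity (int p) a + multiplicity (int p) y"
    using prime_elem_multiplicity_mult_distrib[OF pe] x y a b by simp
  then show ?thesis unfolding padic_val_def q by simp
qed

lemma pnorm_frac:
  assumes p: "prime p" and x: "x \<noteq> 0" and y: "y \<noteq> 0"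
  shows "padic_norm p (of_int x / of_int y) =
     real p powr (real (multiplicity (int p) y) - real (multiplicity (int p) x))"
  using pval_frac[OF assms] x y unfolding padic_norm_def by simp

lemma pnorm_nonneg: "padic_norm p r \<ge> 0"
  unfolding padic_norm_def by simp

lemma pnorm_0 [simp]: "padic_norm p 0 = 0"
  unfolding padic_norm_def by simp

lemma pnorm_pos: assumes "prime p" "r \<noteq> 0" shows "padic_norm p r > 0"
  using assms unfolding padic_norm_def by (simp add: prime_gt_0_nat)

lemma pnorm_mult:
  assumes p: "prime p"
  shows "padic_norm p (r * s) = padic_norm p r * padic_norm p s"
proof (cases "r = 0 \<or> s = 0")
  case True then show ?thesis by auto
next
  case False
  obtain x y where r: "r = of_int x / of_int y" "y > 0" by (rule rat_frac_obtain)
  obtain u w where s: "s = of_int u / of_int w" "w > 0" by (rule rat_frac_obtain)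
  have x: "x \<noteq> 0" and u: "u \<noteq> 0" using False r s by auto
  have pe: "prime_elem (int p)" using p by simp
  have rs: "r * s = of_int (x*u) / of_int (y*w)" using r s by simp
  have "padic_norm p (r * s) = real p powr (real (multiplicity (int p) (y*w)) - real (multiplicity (int p) (x*u)))"
    unfolding rs by (rule pnorm_frac[OF p]) (use x u r s in auto)
  also have "\<dots> = real p powr (real (multiplicity (int p) y) - real (multiplicity (int p) x))
     * real p powr (real (multiplicity (int p) w) - real (multiplicity (int p) u))"
    using prime_elem_multiplicity_mult_distrib[OF pe] x u r s
    by (simp add: powr_add[symmetric] algebra_simps)
  also have "\<dots> = padic_norm p r * padic_norm p s"
    using pnorm_frac[OF p x, of y] pnorm_frac[OF p u, of w] r s by simp
  finally show ?thesis .
qed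

lemma pnorm_ultra:
  assumes p: "prime p"
  shows "padic_norm p (r + s) \<le> max (padic_norm p r) (padic_norm p s)"
proof (cases "r = 0 \<or> s = 0 \<or> r + s = 0")
  case True
  have "0 \<le> max (padic_norm p r) (padic_norm p s)" using pnorm_nonneg[of p r] by simp
  then show ?thesis using True by auto
next
  case False
  obtain x y where r: "r = of_int x / of_int y" "y > 0" by (rule rat_frac_obtain)
  obtain u w where s: "s = of_int u / of_int w" "w > 0" by (rule rat_frac_obtain)
  have x: "x \<noteq> 0" and u: "u \<noteq> 0" using False r s by auto
  have pe: "prime_elem (int p)" using p by simp
  have p1: "real p > 1" using p prime_gt_1_nat by auto
  have rs: "r + s = of_int (x*w + u*y) / of_int (y*w)" using r s by (simp add: field_simps)
  have z: "x*w + u*y \<noteq> 0" using rs False by (metis div_0 of_int_0)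
  define m where "m = multiplicity (int p)"
  define k where "k = min (m x + m w) (m u + m y)"
  have "int p ^ k dvd int p ^ (m x + m w)" by (rule le_imp_power_dvd) (simp add: k_def)
  also have "\<dots> dvd x * w" unfolding power_add m_def by (intro mult_dvd_mono multiplicity_dvd)
  finally have d1: "int p ^ k dvd x * w" .
  have "int p ^ k dvd int p ^ (m u + m y)" by (rule le_imp_power_dvd) (simp add: k_def)
  also have "int p ^ (m u + m y) dvd u * y" unfolding power_add m_def by (intro mult_dvd_mono multiplicity_dvd)
  finally have "int p ^ k dvd u * y" .
  with d1 have "int p ^ k dvd x*w + u*y" by simp
  then have kle: "k \<le> m (x*w + u*y)" unfolding m_def
    using multiplicity_geI[OF z prime_elem_not_unit[OF pe]] by blast
  have mw: "m (y*w) = m y + m w" "m (x*w) = m x + m w" "m (u*y) = m u + m y"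
    using prime_elem_multiplicity_mult_distrib[OF pe] x u r s unfolding m_def by auto
  have "padic_norm p (r+s) = real p powr (real (m (y*w)) - real (m (x*w + u*y)))"
    unfolding rs m_def by (rule pnorm_frac[OF p z]) (use r s in auto)
  also have "\<dots> \<le> real p powr (real (m y + m w) - real k)"
    using kle p1 mw by (intro powr_mono) auto
  also have "\<dots> \<le> max (real p powr (real (m y) - real (m x))) (real p powr (real (m w) - real (m u)))"
    unfolding k_def using p1 by (cases "m x + m w \<le> m u + m y") (auto simp: min_def)
  also have "\<dots> = max (padic_norm p r) (padic_norm p s)"
    using pnorm_frac[OF p x, of y] pnorm_frac[OF p u, of w] r s unfolding m_def by simp
  finally show ?thesis .
qed

lemma pnorm_minus [simp]: "padic_norm p (- r) = padic_norm p r"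
proof -
  have "padic_val p (-r) = padic_val p r"
    unfolding padic_val_def by (simp add: rat_uminus_code Let_def split: prod.splits)
  then show ?thesis unfolding padic_norm_def by simp
qed

lemma pnorm_1 [simp]: "prime p \<Longrightarrow> padic_norm p 1 = 1"
  using pnorm_frac[of p 1 1] by simp

lemma pnorm_int_mult:
  assumes p: "prime p" and x: "x \<noteq> 0"
  shows "padic_norm p (of_int x) = real p powr (- real (multiplicity (int p) x))"
  using pnorm_frac[OF p x, of 1] by simp

lemma pnorm_of_int_le1: assumes p: "prime p" shows "padic_norm p (of_int x) \<le> 1"
proof (cases "x = 0")
  case False
  have "p > 1" using prime_gt_1_nat[OF p] .
  then have "real p \<ge> 1" by simp
  then have "real p powr (- real (multiplicity (int p) x)) \<le> real p powr 0"
    by (intro powr_mono) auto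
  then show ?thesis using pnorm_int_mult[OF p False] \<open>p > 1\<close> by simp
qed simp

lemma pnorm_Ints_le1: assumes "prime p" "r \<in> \<int>" shows "padic_norm p r \<le> 1"
  using assms pnorm_of_int_le1 by (auto elim: Ints_cases)

lemma pnorm_of_int_eq1:
  assumes p: "prime p" and nd: "\<not> int p dvd x"
  shows "padic_norm p (of_int x) = 1"
proof -
  have x: "x \<noteq> 0" using nd by auto
  have "multiplicity (int p) x = 0" using nd not_dvd_imp_multiplicity_0 by blast
  then show ?thesis using pnorm_int_mult[OF p x] prime_gt_0_nat[OF p] by simp
qed

lemma pnorm_p: assumes p: "prime p" shows "padic_norm p (of_nat p) = 1 / real p"
proof -
  have pe: "prime_elem (int p)" using p by simp
  have "multiplicity (int p) (int p) = 1"
    using multiplicity_self[OF _ prime_elem_not_unit[OF pe]] p by (simp add: prime_gt_0_nat)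
  then show ?thesis using pnorm_int_mult[OF p, of "int p"] p
    by (simp add: prime_gt_0_nat powr_minus_divide)
qed

lemma pnorm_power: "prime p \<Longrightarrow> padic_norm p (r ^ n) = padic_norm p r ^ n"
  by (induction n) (simp_all add: pnorm_mult)

lemma pnorm_inverse:
  assumes p: "prime p" shows "padic_norm p (inverse r) = inverse (padic_norm p r)"
proof (cases "r = 0")
  case False
  have "padic_norm p (inverse r) * padic_norm p r = 1"
    using pnorm_mult[OF p, of "inverse r" r] False p by simp
  then show ?thesis by (metis inverse_unique mult.commute)
qed simp

lemma pnorm_divide:
  "prime p \<Longrightarrow> padic_norm p (r / s) = padic_norm p r / padic_norm p s"
  by (simp add: divide_inverse pnorm_mult pnorm_inverse)

lemma pnorm_diff_le:
  "prime p \<Longrightarrow> padic_norm p (r - s) \<le> max (padic_norm p r) (padic_norm p s)"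
  using pnorm_ultra[of p r "- s"] by simp

lemma pnorm_commute: "padic_norm p (r - s) = padic_norm p (s - r)"
  using pnorm_minus[of p "r - s"] by simp

lemma pnorm_ge:
  assumes p: "prime p" and "padic_norm p (r - s) < padic_norm p r"
  shows "padic_norm p r \<le> padic_norm p s"
proof -
  have "padic_norm p r \<le> max (padic_norm p s) (padic_norm p (r - s))"
    using pnorm_ultra[OF p, of s "r - s"] by simp
  then show ?thesis using assms(2) by auto
qed

lemma pnorm_abs_diff:
  assumes p: "prime p"
  shows "\<bar>padic_norm p r - padic_norm p s\<bar> \<le> padic_norm p (r - s)"
proof -
  have "padic_norm p r \<le> max (padic_norm p s) (padic_norm p (r - s))"
    using pnorm_ultra[OF p, of s "r - s"] by simp
  moreover have "padic_norm p s \<le> max (padic_norm p r) (padic_norm p (r - s))"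
    using pnorm_ultra[OF p, of r "s - r"] pnorm_commute[of p r s] by simp
  moreover note pnorm_nonneg[of p r] pnorm_nonneg[of p s] pnorm_nonneg[of p "r - s"]
  ultimately show ?thesis unfolding abs_le_iff max_def
    by (auto split: if_splits)
qed

lemma pnorm_sum_le:
  assumes p: "prime p" and "\<And>x. x \<in> S \<Longrightarrow> padic_norm p (f x) \<le> c" and "0 \<le> c"
  shows "padic_norm p (sum f S) \<le> c"
  using assms(2)
proof (induction S rule: infinite_finite_induct)
  case (insert x F)
  have "padic_norm p (f x) \<le> c" "padic_norm p (sum f F) \<le> c" using insert by auto
  moreover have "sum f (insert x F) = f x + sum f F" using insert by simp
  ultimately show ?case using pnorm_ultra[OF p, of "f x" "sum f F"] by (auto simp: max_def split: if_splits)
qed (use assms(3) in auto)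

lemma pnorm_prod: "prime p \<Longrightarrow> padic_norm p (prod f S) = (\<Prod>x\<in>S. padic_norm p (f x))"
  by (induction S rule: infinite_finite_induct) (auto simp: pnorm_mult)

lemma int_approx:
  assumes p: "prime p" and r: "padic_norm p r \<le> 1"
  shows "\<exists>n::int. padic_norm p (r - of_int n) \<le> (1 / real p) ^ k"
proof (cases "r = 0")
  case True then show ?thesis by (intro exI[of _ 0]) simp
next
  case False
  obtain a b where q: "quotient_of r = (a, b)" by (cases "quotient_of r")
  have rab: "r = of_int a / of_int b" using quotient_of_div[OF q] .
  have b: "b > 0" using quotient_of_denom_pos[OF q] .
  have cop: "coprime a b" using quotient_of_coprime[OF q] .
  have a: "a \<noteq> 0" using False rab by auto
  have pe: "prime_elem (int p)" using p by simp
  have p1: "real p > 1" using p prime_gt_1_nat by auto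
  have nd: "\<not> int p dvd b"
  proof
    assume pb: "int p dvd b"
    have "1 \<le> multiplicity (int p) b"
      using multiplicity_geI[of b "int p" 1] pb b prime_elem_not_unit[OF pe] by auto
    moreover have "padic_norm p r = real p powr (real (multiplicity (int p) b) - real (multiplicity (int p) a))"
      using pnorm_frac[OF p a, of b] b rab by simp
    ultimately have "real p powr (real (multiplicity (int p) b) - real (multiplicity (int p) a)) \<le> real p powr 0"
      using r by simp
    then have "real (multiplicity (int p) b) - real (multiplicity (int p) a) \<le> 0"
      using p1 powr_le_cancel_iff by blast
    then have "multiplicity (int p) b \<le> multiplicity (int p) a" by simp
    with \<open>1 \<le> multiplicity (int p) b\<close> have "int p dvd a"
      by (metis dual_order.trans multiplicity_dvd' power_one_right)
    with pb cop have "is_unit (int p)" using coprime_common_divisor by blast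
    then show False using prime_elem_not_unit[OF pe] by blast
  qed
  have "coprime (int p) b" using nd p by (intro prime_imp_coprime) auto
  then have "coprime b (int p)" by (simp add: coprime_commute)
  then have "coprime b (int p ^ k)" by simp
  then obtain u v where uv: "u * b + v * int p ^ k = 1" using bezout_int[of b "int p ^ k"] by auto
  have e1: "1 - (of_int u :: rat) * of_int b = of_int v * of_nat p ^ k"
    using arg_cong[OF uv, of "of_int :: int \<Rightarrow> rat"] by (simp add: algebra_simps)
  have e2: "r - of_int (a * u) = of_int a * (1 - of_int u * of_int b) / of_int b"
    using b unfolding rab by (simp add: field_simps)
  have "r - of_int (a * u) = of_int a * of_int v * of_nat p ^ k / of_int b"
    unfolding e2 e1 by (simp add: mult.assoc)
  moreover have "padic_norm p (of_int b) = 1" using pnorm_of_int_eq1[OF p nd] .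
  ultimately have "padic_norm p (r - of_int (a * u)) = padic_norm p (of_int a) * padic_norm p (of_int v) * (1 / real p) ^ k"
    using p by (simp add: pnorm_mult pnorm_divide pnorm_power pnorm_p)
  also have "\<dots> \<le> 1 * 1 * (1 / real p) ^ k"
    using pnorm_of_int_le1[OF p] pnorm_nonneg[of p] by (intro mult_mono) auto
  finally have "padic_norm p (r - of_int (a * u)) \<le> (1 / real p) ^ k" by simp
  then show ?thesis by blast
qed

definition ebnd :: "nat \<Rightarrow> (nat \<Rightarrow> rat) \<Rightarrow> bool" where
  "ebnd p X \<longleftrightarrow> (\<exists>B. eventually (\<lambda>k. padic_norm p (X k) \<le> B) sequentially)"

definition elow :: "nat \<Rightarrow> (nat \<Rightarrow> rat) \<Rightarrow> bool" where
  "elow p X \<longleftrightarrow> (\<exists>d>0. eventually (\<lambda>k. padic_norm p (X k) \<ge> d) sequentially)"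

lemma pnull_ev: "pnull p X \<longleftrightarrow> (\<forall>e>0. eventually (\<lambda>k. padic_norm p (X k) < e) sequentially)"
  unfolding pnull_def eventually_sequentially by simp

lemma pnull_evD: "pnull p X \<Longrightarrow> e > 0 \<Longrightarrow> eventually (\<lambda>k. padic_norm p (X k) < e) sequentially"
  unfolding pnull_ev by blast

lemma ebnd_pos: assumes "ebnd p X"
  obtains B where "B > 0" "eventually (\<lambda>k. padic_norm p (X k) \<le> B) sequentially"
proof -
  obtain B where "eventually (\<lambda>k. padic_norm p (X k) \<le> B) sequentially"
    using assms unfolding ebnd_def by blast
  then have "eventually (\<lambda>k. padic_norm p (X k) \<le> max B 1) sequentially"
    by (rule eventually_mono) auto
  then show ?thesis using that[of "max B 1"] by auto
qed

lemma pnull_cong_ev: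
  assumes "pnull p X" "eventually (\<lambda>k. padic_norm p (Y k) \<le> padic_norm p (X k)) sequentially"
  shows "pnull p Y"
  unfolding pnull_ev
proof (intro allI impI)
  fix e :: real assume e: "e > 0"
  have "eventually (\<lambda>k. padic_norm p (X k) < e) sequentially" using pnull_evD[OF assms(1) e] .
  with assms(2) show "eventually (\<lambda>k. padic_norm p (Y k) < e) sequentially"
    by (rule eventually_elim2) auto
qed

lemma pnull_eq_ev:
  assumes "pnull p X" "eventually (\<lambda>k. Y k = X k) sequentially"
  shows "pnull p Y"
  using assms(1) by (rule pnull_cong_ev) (use assms(2) in \<open>auto elim: eventually_mono\<close>)

lemma pnull_zero: "pnull p (\<lambda>k. 0)"
  unfolding pnull_def by auto

lemma pnull_add:
  assumes p: "prime p" and "pnull p X" "pnull p Y"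
  shows "pnull p (\<lambda>k. X k + Y k)"
  unfolding pnull_ev
proof (intro allI impI)
  fix e :: real assume e: "e > 0"
  have "eventually (\<lambda>k. padic_norm p (X k) < e) sequentially"
       "eventually (\<lambda>k. padic_norm p (Y k) < e) sequentially" using pnull_evD[OF assms(2) e] pnull_evD[OF assms(3) e] by auto
  then show "eventually (\<lambda>k. padic_norm p (X k + Y k) < e) sequentially"
  proof (rule eventually_elim2)
    fix k assume "padic_norm p (X k) < e" "padic_norm p (Y k) < e"
    then show "padic_norm p (X k + Y k) < e"
      using pnorm_ultra[OF p, of "X k" "Y k"] by linarith
  qed
qed

lemma pnull_minus: "pnull p X \<Longrightarrow> pnull p (\<lambda>k. - X k)"
  unfolding pnull_def by simp

lemma pnull_diff:
  assumes p: "prime p" and "pnull p X" "pnull p Y"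
  shows "pnull p (\<lambda>k. X k - Y k)"
  using pnull_add[OF p assms(2) pnull_minus[OF assms(3)]] by simp

lemma pnull_mult:
  assumes p: "prime p" and "ebnd p X" "pnull p Y"
  shows "pnull p (\<lambda>k. X k * Y k)"
  unfolding pnull_ev
proof (intro allI impI)
  fix e :: real assume e: "e > 0"
  obtain B where B: "B > 0" "eventually (\<lambda>k. padic_norm p (X k) \<le> B) sequentially"
    using ebnd_pos[OF assms(2)] by blast
  have "eventually (\<lambda>k. padic_norm p (Y k) < e / B) sequentially" using pnull_evD[OF assms(3)] e B by simp
  with B(2) show "eventually (\<lambda>k. padic_norm p (X k * Y k) < e) sequentially"
  proof (rule eventually_elim2)
    fix k assume 1: "padic_norm p (X k) \<le> B" and 2: "padic_norm p (Y k) < e / B"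
    have "padic_norm p (X k) * padic_norm p (Y k) \<le> B * padic_norm p (Y k)"
      using 1 pnorm_nonneg[of p] by (intro mult_right_mono) auto
    also have "\<dots> < e" using 2 B by (simp add: pos_less_divide_eq mult.commute)
    finally show "padic_norm p (X k * Y k) < e" using B by (simp add: pnorm_mult[OF p])
  qed
qed

lemma pnull_mult': "prime p \<Longrightarrow> pnull p X \<Longrightarrow> ebnd p Y \<Longrightarrow> pnull p (\<lambda>k. X k * Y k)"
proof -
  assume "prime p" "pnull p X" "ebnd p Y"
  then have "pnull p (\<lambda>k. Y k * X k)" using pnull_mult[of p Y X] by blast
  moreover have "(\<lambda>k. Y k * X k) = (\<lambda>k. X k * Y k)" by (simp add: mult.commute)
  ultimately show ?thesis by simp
qed

lemma pnull_sum:
  assumes p: "prime p" and "\<And>i. i \<in> S \<Longrightarrow> pnull p (X i)"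
  shows "pnull p (\<lambda>k. \<Sum>i\<in>S. X i k)"
  using assms(2)
proof (induction S rule: infinite_finite_induct)
  case (insert x F)
  then show ?case using pnull_add[OF p, of "X x" "\<lambda>k. \<Sum>i\<in>F. X i k"] by auto
qed (auto simp: pnull_zero)

lemma ebnd_const: "ebnd p (\<lambda>k. c)"
  unfolding ebnd_def by auto

lemma ebnd_add:
  assumes p: "prime p" and "ebnd p X" "ebnd p Y"
  shows "ebnd p (\<lambda>k. X k + Y k)"
proof -
  obtain B C where "eventually (\<lambda>k. padic_norm p (X k) \<le> B) sequentially"
      "eventually (\<lambda>k. padic_norm p (Y k) \<le> C) sequentially" using assms unfolding ebnd_def by blast
  then have "eventually (\<lambda>k. padic_norm p (X k + Y k) \<le> max B C) sequentially"
  proof (rule eventually_elim2)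
    fix k assume "padic_norm p (X k) \<le> B" "padic_norm p (Y k) \<le> C"
    then show "padic_norm p (X k + Y k) \<le> max B C"
      using pnorm_ultra[OF p, of "X k" "Y k"] by (auto simp: max_def split: if_splits)
  qed
  then show ?thesis unfolding ebnd_def by blast
qed

lemma ebnd_minus: "ebnd p X \<Longrightarrow> ebnd p (\<lambda>k. - X k)"
  unfolding ebnd_def by simp

lemma ebnd_diff: "prime p \<Longrightarrow> ebnd p X \<Longrightarrow> ebnd p Y \<Longrightarrow> ebnd p (\<lambda>k. X k - Y k)"
proof -
  assume a: "prime p" "ebnd p X" "ebnd p Y"
  have "ebnd p (\<lambda>k. X k + - Y k)" using a ebnd_minus[OF a(3)] by (intro ebnd_add) auto
  then show ?thesis by simp
qed

lemma ebnd_mult: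
  assumes p: "prime p" and "ebnd p X" "ebnd p Y"
  shows "ebnd p (\<lambda>k. X k * Y k)"
proof -
  obtain B where B: "B > 0" "eventually (\<lambda>k. padic_norm p (X k) \<le> B) sequentially"
    using ebnd_pos[OF assms(2)] by blast
  obtain C where C: "C > 0" "eventually (\<lambda>k. padic_norm p (Y k) \<le> C) sequentially"
    using ebnd_pos[OF assms(3)] by blast
  have "eventually (\<lambda>k. padic_norm p (X k * Y k) \<le> B * C) sequentially"
    using B(2) C(2)
  proof (rule eventually_elim2)
    fix k assume "padic_norm p (X k) \<le> B" "padic_norm p (Y k) \<le> C"
    then show "padic_norm p (X k * Y k) \<le> B * C"
      unfolding pnorm_mult[OF p] using B C by (intro mult_mono) (auto simp: pnorm_nonneg)
  qed
  then show ?thesis unfolding ebnd_def by blast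
qed

lemma ebnd_sum:
  assumes p: "prime p" and "\<And>i. i \<in> S \<Longrightarrow> ebnd p (X i)"
  shows "ebnd p (\<lambda>k. \<Sum>i\<in>S. X i k)"
  using assms(2)
proof (induction S rule: infinite_finite_induct)
  case (insert x F)
  then show ?case using ebnd_add[OF p, of "X x" "\<lambda>k. \<Sum>i\<in>F. X i k"] by auto
qed (auto simp: ebnd_const)

lemma pnull_ebnd: "pnull p X \<Longrightarrow> ebnd p X"
proof -
  assume "pnull p X"
  then have "eventually (\<lambda>k. padic_norm p (X k) < 1) sequentially" unfolding pnull_ev by simp
  then have "eventually (\<lambda>k. padic_norm p (X k) \<le> 1) sequentially" by (rule eventually_mono) auto
  then show ?thesis unfolding ebnd_def by blast
qed

lemma cauchy_ebnd:
  assumes p: "prime p" and "pcauchy p X" shows "ebnd p X"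
proof -
  obtain N where N: "\<forall>m\<ge>N. \<forall>k\<ge>N. padic_norm p (X m - X k) < 1"
    using assms(2) unfolding pcauchy_def by (meson zero_less_one)
  have "\<forall>k\<ge>N. padic_norm p (X k) \<le> max (padic_norm p (X N)) 1"
  proof (intro allI impI)
    fix k assume "k \<ge> N"
    have "padic_norm p (X k) \<le> max (padic_norm p (X N)) (padic_norm p (X k - X N))"
      using pnorm_ultra[OF p, of "X N" "X k - X N"] by simp
    moreover have "padic_norm p (X k - X N) < 1" using N \<open>k \<ge> N\<close> by auto
    ultimately show "padic_norm p (X k) \<le> max (padic_norm p (X N)) 1"
      by (auto simp: max_def split: if_splits)
  qed
  then show ?thesis unfolding ebnd_def eventually_sequentially by blast
qed

lemma cauchy_elow:
  assumes p: "prime p" and "pcauchy p X" "\<not> pnull p X" shows "elow p X"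
proof -
  obtain e where e: "e > 0" "\<forall>N. \<exists>k\<ge>N. padic_norm p (X k) \<ge> e"
    using assms(3) unfolding pnull_def by (auto simp: not_less)
  obtain N where N: "\<forall>m\<ge>N. \<forall>k\<ge>N. padic_norm p (X m - X k) < e"
    using assms(2) e unfolding pcauchy_def by blast
  obtain k0 where k0: "k0 \<ge> N" "padic_norm p (X k0) \<ge> e" using e by blast
  have "\<forall>m\<ge>N. padic_norm p (X m) \<ge> e"
  proof (intro allI impI)
    fix m assume "m \<ge> N"
    then have "padic_norm p (X k0 - X m) < padic_norm p (X k0)" using N k0 by force
    then have "padic_norm p (X k0) \<le> padic_norm p (X m)" by (rule pnorm_ge[OF p])
    then show "padic_norm p (X m) \<ge> e" using k0 by simp
  qed
  then show ?thesis unfolding elow_def eventually_sequentially using e by blast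
qed

lemma elow_not_pnull: "elow p X \<Longrightarrow> \<not> pnull p X"
proof
  assume "elow p X" "pnull p X"
  then obtain d where d: "d > 0" "eventually (\<lambda>k. padic_norm p (X k) \<ge> d) sequentially"
    unfolding elow_def by blast
  have lt: "eventually (\<lambda>k. padic_norm p (X k) < d) sequentially"
    using pnull_evD[OF \<open>pnull p X\<close> d(1)] .
  have "eventually (\<lambda>k. False) sequentially"
    using d(2) lt by (rule eventually_elim2) auto
  then show False by simp
qed

lemma elow_perturb:
  assumes p: "prime p" and "elow p X" "pnull p (\<lambda>k. X k - Y k)"
  shows "elow p Y"
proof -
  obtain d where d: "d > 0" "eventually (\<lambda>k. padic_norm p (X k) \<ge> d) sequentially"
    using assms(2) unfolding elow_def by blast
  have "eventually (\<lambda>k. padic_norm p (X k - Y k) < d) sequentially"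
    using pnull_evD[OF assms(3) d(1)] .
  with d(2) have "eventually (\<lambda>k. padic_norm p (Y k) \<ge> d) sequentially"
  proof (rule eventually_elim2)
    fix k assume 1: "padic_norm p (X k) \<ge> d" and 2: "padic_norm p (X k - Y k) < d"
    then have "padic_norm p (X k) \<le> padic_norm p (Y k)" by (intro pnorm_ge[OF p]) simp
    then show "padic_norm p (Y k) \<ge> d" using 1 by simp
  qed
  then show ?thesis using d unfolding elow_def by blast
qed

lemma elow_ebnd_inverse:
  assumes p: "prime p" and "elow p X" shows "ebnd p (\<lambda>k. inverse (X k))"
proof -
  obtain d where d: "d > 0" "eventually (\<lambda>k. padic_norm p (X k) \<ge> d) sequentially"
    using assms(2) unfolding elow_def by blast
  have "eventually (\<lambda>k. padic_norm p (inverse (X k)) \<le> inverse d) sequentially"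
    using d(2) by (rule eventually_mono) (use d in \<open>simp add: pnorm_inverse[OF p] le_imp_inverse_le\<close>)
  then show ?thesis unfolding ebnd_def by blast
qed

lemma elow_mult:
  assumes p: "prime p" and "elow p X" "elow p Y" shows "elow p (\<lambda>k. X k * Y k)"
proof -
  obtain d where d: "d > 0" "eventually (\<lambda>k. padic_norm p (X k) \<ge> d) sequentially"
    using assms(2) unfolding elow_def by blast
  obtain c where c: "c > 0" "eventually (\<lambda>k. padic_norm p (Y k) \<ge> c) sequentially"
    using assms(3) unfolding elow_def by blast
  have "eventually (\<lambda>k. padic_norm p (X k * Y k) \<ge> d * c) sequentially"
    using d(2) c(2)
  proof (rule eventually_elim2)
    fix k assume "padic_norm p (X k) \<ge> d" "padic_norm p (Y k) \<ge> c"
    then show "padic_norm p (X k * Y k) \<ge> d * c"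
      unfolding pnorm_mult[OF p] using d c by (intro mult_mono) auto
  qed
  moreover have "d * c > 0" using d c by simp
  ultimately show ?thesis unfolding elow_def by blast
qed

lemma elow_const: "prime p \<Longrightarrow> c \<noteq> 0 \<Longrightarrow> elow p (\<lambda>k. c)"
  unfolding elow_def using pnorm_pos[of p c] by auto

lemma ev_seq_obtain: assumes "eventually P sequentially" obtains N where "\<And>k. k \<ge> N \<Longrightarrow> P k"
  using assms unfolding eventually_sequentially by blast

lemma cauchy_getN:
  assumes "pcauchy p X" "e > 0"
  obtains N where "\<And>m k. m \<ge> N \<Longrightarrow> k \<ge> N \<Longrightarrow> padic_norm p (X m - X k) < e"
  using assms unfolding pcauchy_def by blast

lemma pcauchyI:
  assumes "\<And>e. e > 0 \<Longrightarrow> \<exists>N. \<forall>m\<ge>N. \<forall>k\<ge>N. padic_norm p (X m - X k) < e"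
  shows "pcauchy p X"
  using assms unfolding pcauchy_def by blast

lemma pnorm_ultra3:
  assumes p: "prime p" and "padic_norm p a < e" "padic_norm p b < e" "padic_norm p c < e"
  shows "padic_norm p (a + b + c) < e"
proof -
  have "padic_norm p (a + b) < e" using pnorm_ultra[OF p, of a b] assms by linarith
  then show ?thesis using pnorm_ultra[OF p, of "a + b" c] assms by linarith
qed

lemma cauchy_const: "pcauchy p (\<lambda>k. c)"
  unfolding pcauchy_def by simp

lemma cauchy_add:
  assumes p: "prime p" and X: "pcauchy p X" and Y: "pcauchy p Y"
  shows "pcauchy p (\<lambda>k. X k + Y k)"
proof (rule pcauchyI)
  fix e :: real assume e: "e > 0"
  obtain N1 where N1: "\<And>m k. m \<ge> N1 \<Longrightarrow> k \<ge> N1 \<Longrightarrow> padic_norm p (X m - X k) < e"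
    using cauchy_getN[OF X e] by blast
  obtain N2 where N2: "\<And>m k. m \<ge> N2 \<Longrightarrow> k \<ge> N2 \<Longrightarrow> padic_norm p (Y m - Y k) < e"
    using cauchy_getN[OF Y e] by blast
  have "\<forall>m\<ge>max N1 N2. \<forall>k\<ge>max N1 N2. padic_norm p (X m + Y m - (X k + Y k)) < e"
  proof (intro allI impI)
    fix m k assume "m \<ge> max N1 N2" "k \<ge> max N1 N2"
    then have "padic_norm p (X m - X k) < e" "padic_norm p (Y m - Y k) < e" using N1 N2 by auto
    moreover have "X m + Y m - (X k + Y k) = (X m - X k) + (Y m - Y k)" by simp
    ultimately show "padic_norm p (X m + Y m - (X k + Y k)) < e"
      using pnorm_ultra[OF p, of "X m - X k" "Y m - Y k"] by (simp only:)
  qed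
  then show "\<exists>N. \<forall>m\<ge>N. \<forall>k\<ge>N. padic_norm p (X m + Y m - (X k + Y k)) < e" by blast
qed

lemma cauchy_minus: "pcauchy p X \<Longrightarrow> pcauchy p (\<lambda>k. - X k)"
proof -
  assume "pcauchy p X"
  moreover have "\<And>m k. padic_norm p (- X m - - X k) = padic_norm p (X m - X k)"
    using pnorm_commute by (simp add: pnorm_commute)
  ultimately show ?thesis unfolding pcauchy_def by simp
qed

lemma cauchy_diff:
  "prime p \<Longrightarrow> pcauchy p X \<Longrightarrow> pcauchy p Y \<Longrightarrow> pcauchy p (\<lambda>k. X k - Y k)"
proof -
  assume a: "prime p" "pcauchy p X" "pcauchy p Y"
  have "pcauchy p (\<lambda>k. X k + - Y k)" using a cauchy_minus[OF a(3)] by (intro cauchy_add) auto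
  then show ?thesis by simp
qed

lemma cauchy_perturb:
  assumes p: "prime p" and X: "pcauchy p X" and D: "pnull p (\<lambda>k. X k - Y k)"
  shows "pcauchy p Y"
proof (rule pcauchyI)
  fix e :: real assume e: "e > 0"
  obtain N1 where N1: "\<And>m k. m \<ge> N1 \<Longrightarrow> k \<ge> N1 \<Longrightarrow> padic_norm p (X m - X k) < e"
    using cauchy_getN[OF X e] by blast
  obtain N2 where N2: "\<And>k. k \<ge> N2 \<Longrightarrow> padic_norm p (X k - Y k) < e"
    using D e unfolding pnull_def by blast
  have "\<forall>m\<ge>max N1 N2. \<forall>k\<ge>max N1 N2. padic_norm p (Y m - Y k) < e"
  proof (intro allI impI)
    fix m k assume "m \<ge> max N1 N2" "k \<ge> max N1 N2"
    then have "padic_norm p (X m - X k) < e" "padic_norm p (X m - Y m) < e"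
      "padic_norm p (X k - Y k) < e" using N1 N2 by auto
    then have "padic_norm p (X m - X k) < e" "padic_norm p (- (X m - Y m)) < e"
      "padic_norm p (X k - Y k) < e" by (simp_all only: pnorm_minus)
    moreover have "Y m - Y k = (X m - X k) + (- (X m - Y m)) + (X k - Y k)" by simp
    ultimately show "padic_norm p (Y m - Y k) < e" using pnorm_ultra3[OF p] by metis
  qed
  then show "\<exists>N. \<forall>m\<ge>N. \<forall>k\<ge>N. padic_norm p (Y m - Y k) < e" by blast
qed

lemma cauchy_mult:
  assumes p: "prime p" and X: "pcauchy p X" and Y: "pcauchy p Y"
  shows "pcauchy p (\<lambda>k. X k * Y k)"
proof (rule pcauchyI)
  fix e :: real assume e: "e > 0"
  obtain B where B: "B > 0" "eventually (\<lambda>k. padic_norm p (X k) \<le> B) sequentially"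
    using ebnd_pos[OF cauchy_ebnd[OF p X]] by blast
  obtain C where C: "C > 0" "eventually (\<lambda>k. padic_norm p (Y k) \<le> C) sequentially"
    using ebnd_pos[OF cauchy_ebnd[OF p Y]] by blast
  obtain N0 where N0: "\<And>k. k \<ge> N0 \<Longrightarrow> padic_norm p (X k) \<le> B \<and> padic_norm p (Y k) \<le> C"
    using eventually_conj[OF B(2) C(2)] by (rule ev_seq_obtain) blast
  have eC: "e / C > 0" and eB: "e / B > 0" using e B C by auto
  obtain N1 where N1: "\<And>m k. m \<ge> N1 \<Longrightarrow> k \<ge> N1 \<Longrightarrow> padic_norm p (X m - X k) < e / C"
    using cauchy_getN[OF X eC] by blast
  obtain N2 where N2: "\<And>m k. m \<ge> N2 \<Longrightarrow> k \<ge> N2 \<Longrightarrow> padic_norm p (Y m - Y k) < e / B"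
    using cauchy_getN[OF Y eB] by blast
  define N where "N = max N0 (max N1 N2)"
  have "\<forall>m\<ge>N. \<forall>k\<ge>N. padic_norm p (X m * Y m - X k * Y k) < e"
  proof (intro allI impI)
    fix m k assume mk: "m \<ge> N" "k \<ge> N"
    have 1: "padic_norm p (X m * (Y m - Y k)) < e"
    proof -
      have "padic_norm p (X m * (Y m - Y k)) = padic_norm p (X m) * padic_norm p (Y m - Y k)"
        by (rule pnorm_mult[OF p])
      also have "\<dots> \<le> B * padic_norm p (Y m - Y k)"
        using N0[of m] mk by (intro mult_right_mono) (auto simp: N_def pnorm_nonneg)
      also have "\<dots> < B * (e / B)" using N2[of m k] mk B by (intro mult_strict_left_mono) (auto simp: N_def)
      also have "\<dots> = e" using B by simp
      finally show ?thesis .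
    qed
    have 2: "padic_norm p ((X m - X k) * Y k) < e"
    proof -
      have "padic_norm p ((X m - X k) * Y k) = padic_norm p (Y k) * padic_norm p (X m - X k)"
        by (simp add: pnorm_mult[OF p])
      also have "\<dots> \<le> C * padic_norm p (X m - X k)"
        using N0[of k] mk by (intro mult_right_mono) (auto simp: N_def pnorm_nonneg)
      also have "\<dots> < C * (e / C)" using N1[of m k] mk C by (intro mult_strict_left_mono) (auto simp: N_def)
      also have "\<dots> = e" using C by simp
      finally show ?thesis .
    qed
    have "X m * Y m - X k * Y k = X m * (Y m - Y k) + (X m - X k) * Y k" by (simp add: algebra_simps)
    then show "padic_norm p (X m * Y m - X k * Y k) < e"
      using pnorm_ultra[OF p, of "X m * (Y m - Y k)" "(X m - X k) * Y k"] 1 2 by simp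
  qed
  then show "\<exists>N. \<forall>m\<ge>N. \<forall>k\<ge>N. padic_norm p (X m * Y m - X k * Y k) < e" by blast
qed

lemma cauchy_inverse:
  assumes p: "prime p" and X: "pcauchy p X" and L: "elow p X"
  shows "pcauchy p (\<lambda>k. inverse (X k))"
proof (rule pcauchyI)
  fix e :: real assume e: "e > 0"
  obtain d where d: "d > 0" "eventually (\<lambda>k. padic_norm p (X k) \<ge> d) sequentially"
    using L unfolding elow_def by blast
  obtain N0 where N0: "\<And>k. k \<ge> N0 \<Longrightarrow> padic_norm p (X k) \<ge> d"
    using d(2) by (rule ev_seq_obtain) blast
  have ed: "e * (d * d) > 0" using e d by simp
  obtain N1 where N1: "\<And>m k. m \<ge> N1 \<Longrightarrow> k \<ge> N1 \<Longrightarrow> padic_norm p (X m - X k) < e * (d * d)"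
    using cauchy_getN[OF X ed] by blast
  have "\<forall>m\<ge>max N0 N1. \<forall>k\<ge>max N0 N1. padic_norm p (inverse (X m) - inverse (X k)) < e"
  proof (intro allI impI)
    fix m k assume mk: "m \<ge> max N0 N1" "k \<ge> max N0 N1"
    have dm: "padic_norm p (X m) \<ge> d" and dk: "padic_norm p (X k) \<ge> d" using N0 mk by auto
    then have nz: "X m \<noteq> 0" "X k \<noteq> 0" using d by auto
    have "inverse (X m) - inverse (X k) = (X k - X m) / (X m * X k)"
      using nz by (simp add: field_simps)
    then have "padic_norm p (inverse (X m) - inverse (X k)) =
        padic_norm p (X m - X k) / (padic_norm p (X m) * padic_norm p (X k))"
      by (simp add: pnorm_divide[OF p] pnorm_mult[OF p] pnorm_commute[of p "X k"])
    also have "\<dots> \<le> padic_norm p (X m - X k) / (d * d)"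
      using dm dk d by (intro divide_left_mono mult_mono) (auto simp: pnorm_nonneg)
    also have "\<dots> < e" using N1[of m k] mk d by (simp add: pos_divide_less_eq)
    finally show "padic_norm p (inverse (X m) - inverse (X k)) < e" .
  qed
  then show "\<exists>N. \<forall>m\<ge>N. \<forall>k\<ge>N. padic_norm p (inverse (X m) - inverse (X k)) < e" by blast
qed

lemma cauchy_sum:
  assumes p: "prime p" and "\<And>i. i \<in> S \<Longrightarrow> pcauchy p (X i)"
  shows "pcauchy p (\<lambda>k. \<Sum>i\<in>S. X i k)"
  using assms(2)
proof (induction S rule: infinite_finite_induct)
  case (insert x F)
  then show ?case using cauchy_add[OF p, of "X x" "\<lambda>k. \<Sum>i\<in>F. X i k"] by auto
qed (auto simp: cauchy_const)

lemma cauchy_norm_convergent: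
  assumes p: "prime p" and X: "pcauchy p X"
  shows "convergent (\<lambda>k. padic_norm p (X k))"
proof -
  have "Cauchy (\<lambda>k. padic_norm p (X k))"
  proof (rule metric_CauchyI)
    fix e :: real assume e: "e > 0"
    obtain N where N: "\<And>m k. m \<ge> N \<Longrightarrow> k \<ge> N \<Longrightarrow> padic_norm p (X m - X k) < e"
      using cauchy_getN[OF X e] by blast
    have "\<forall>m\<ge>N. \<forall>k\<ge>N. dist (padic_norm p (X m)) (padic_norm p (X k)) < e"
      using N pnorm_abs_diff[OF p] unfolding dist_real_def by (meson le_less_trans)
    then show "\<exists>M. \<forall>m\<ge>M. \<forall>n\<ge>M. dist (padic_norm p (X m)) (padic_norm p (X n)) < e" by blast
  qed
  then show ?thesis using Cauchy_convergent_iff by blast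
qed

lemma Qp_norm_le:
  assumes p: "prime p" and X: "pcauchy p X" and ev: "\<And>k. k \<ge> N \<Longrightarrow> padic_norm p (X k) \<le> c"
  shows "Qp_norm p X \<le> c"
proof -
  have "(\<lambda>k. padic_norm p (X k)) \<longlonglongrightarrow> Qp_norm p X"
    unfolding Qp_norm_def using cauchy_norm_convergent[OF p X] convergent_LIMSEQ_iff by blast
  then show ?thesis using ev by (intro LIMSEQ_le_const2) auto
qed

lemma ebnd_uniform:
  fixes X :: "'i::finite \<Rightarrow> nat \<Rightarrow> rat"
  assumes "\<And>i. ebnd p (X i)"
  shows "\<exists>B>0. eventually (\<lambda>k. \<forall>i. padic_norm p (X i k) \<le> B) sequentially"
proof -
  have "\<forall>i. \<exists>B. B > 0 \<and> eventually (\<lambda>k. padic_norm p (X i k) \<le> B) sequentially"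
    using ebnd_pos[OF assms] by metis
  then obtain Bf where Bf: "\<And>i. Bf i > 0" "\<And>i. eventually (\<lambda>k. padic_norm p (X i k) \<le> Bf i) sequentially"
    by metis
  define B where "B = (\<Sum>i\<in>UNIV. Bf i)"
  have le: "Bf i \<le> B" for i unfolding B_def by (rule member_le_sum) (auto intro: less_imp_le Bf)
  have "eventually (\<lambda>k. \<forall>i. padic_norm p (X i k) \<le> Bf i) sequentially"
    using Bf(2) by (simp add: eventually_all_finite)
  then have "eventually (\<lambda>k. \<forall>i. padic_norm p (X i k) \<le> B) sequentially"
    by (rule eventually_mono) (meson le order_trans)
  moreover have "B > 0" using le[of undefined] Bf(1)[of undefined] by linarith
  ultimately show ?thesis by blast
qed

lemma qform_diff_le:
  fixes A :: "'n::finite \<Rightarrow> 'n \<Rightarrow> nat \<Rightarrow> rat"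
  assumes p: "prime p"
    and hA: "\<And>i j. padic_norm p (A i j k) \<le> B"
    and hx: "\<And>i. padic_norm p (x i k) \<le> C" and hy: "\<And>i. padic_norm p (y i k) \<le> C"
    and hd: "\<And>i. padic_norm p (x i k - y i k) \<le> \<eta>"
    and B: "B \<ge> 0" and C: "C \<ge> 0" and eta: "\<eta> \<ge> 0"
  shows "padic_norm p (qform A x k - qform A y k) \<le> B * (C * \<eta>)"
proof -
  have eq: "qform A x k - qform A y k =
     (\<Sum>i\<in>UNIV. \<Sum>j\<in>UNIV. A i j k * (x i k * (x j k - y j k) + (x i k - y i k) * y j k))"
    unfolding qform_def by (simp add: sum_subtractf[symmetric] algebra_simps)
  show ?thesis unfolding eq
  proof (intro pnorm_sum_le[OF p])
    fix i j :: 'n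
    have 1: "padic_norm p (x i k * (x j k - y j k)) \<le> C * \<eta>"
      unfolding pnorm_mult[OF p] using hx hd C by (intro mult_mono) (auto simp: pnorm_nonneg)
    have 2: "padic_norm p ((x i k - y i k) * y j k) \<le> C * \<eta>"
      unfolding pnorm_mult[OF p] using hy hd eta by (subst mult.commute) (intro mult_mono, auto simp: pnorm_nonneg)
    have 3: "padic_norm p (x i k * (x j k - y j k) + (x i k - y i k) * y j k) \<le> C * \<eta>"
      using pnorm_ultra[OF p, of "x i k * (x j k - y j k)" "(x i k - y i k) * y j k"] 1 2 by linarith
    show "padic_norm p (A i j k * (x i k * (x j k - y j k) + (x i k - y i k) * y j k)) \<le> B * (C * \<eta>)"
      unfolding pnorm_mult[OF p] using hA 3 B by (intro mult_mono) (auto simp: pnorm_nonneg)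
  qed (use B C eta in auto)
qed

lemma qform_null_diff:
  fixes A :: "'n::finite \<Rightarrow> 'n \<Rightarrow> nat \<Rightarrow> rat"
  assumes p: "prime p" and hA: "\<And>i j. ebnd p (A i j)"
    and hx: "\<And>i. ebnd p (x i)" and hy: "\<And>i. ebnd p (y i)"
    and hd: "\<And>i. pnull p (\<lambda>k. x i k - y i k)"
  shows "pnull p (\<lambda>k. qform A x k - qform A y k)"
  unfolding pnull_ev
proof (intro allI impI)
  fix e :: real assume e: "e > 0"
  obtain B where B: "B > 0" "eventually (\<lambda>k. \<forall>ij. padic_norm p ((\<lambda>(i,j). A i j) ij k) \<le> B) sequentially"
    using ebnd_uniform[of p "\<lambda>(i,j). A i j"] hA by fastforce
  have B': "eventually (\<lambda>k. \<forall>i j. padic_norm p (A i j k) \<le> B) sequentially"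
    using B(2) by (rule eventually_mono) auto
  obtain C1 where C1: "C1 > 0" "eventually (\<lambda>k. \<forall>i. padic_norm p (x i k) \<le> C1) sequentially"
    using ebnd_uniform[of p x] hx by blast
  obtain C2 where C2: "C2 > 0" "eventually (\<lambda>k. \<forall>i. padic_norm p (y i k) \<le> C2) sequentially"
    using ebnd_uniform[of p y] hy by blast
  define C where "C = max C1 C2"
  have C: "C > 0" using C1 unfolding C_def by simp
  define \<eta> where "\<eta> = e / (2 * B * C)"
  have eta: "\<eta> > 0" using e B C unfolding \<eta>_def by simp
  have D: "eventually (\<lambda>k. \<forall>i. padic_norm p (x i k - y i k) < \<eta>) sequentially"
    using pnull_evD[OF hd eta] by (simp add: eventually_all_finite)
  have "eventually (\<lambda>k. (\<forall>i j. padic_norm p (A i j k) \<le> B) \<and> (\<forall>i. padic_norm p (x i k) \<le> C1)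
      \<and> (\<forall>i. padic_norm p (y i k) \<le> C2) \<and> (\<forall>i. padic_norm p (x i k - y i k) < \<eta>)) sequentially"
    using B' C1(2) C2(2) D by (intro eventually_conj) auto
  then show "eventually (\<lambda>k. padic_norm p (qform A x k - qform A y k) < e) sequentially"
  proof (rule eventually_mono)
    fix k assume h: "(\<forall>i j. padic_norm p (A i j k) \<le> B) \<and> (\<forall>i. padic_norm p (x i k) \<le> C1)
      \<and> (\<forall>i. padic_norm p (y i k) \<le> C2) \<and> (\<forall>i. padic_norm p (x i k - y i k) < \<eta>)"
    have "padic_norm p (qform A x k - qform A y k) \<le> B * (C * \<eta>)"
      using h B C eta unfolding C_def by (intro qform_diff_le[OF p]) (auto intro: less_imp_le simp: le_max_iff_disj)
    also have "\<dots> = e / 2" using B C unfolding \<eta>_def by (simp add: field_simps)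
    also have "\<dots> < e" using e by simp
    finally show "padic_norm p (qform A x k - qform A y k) < e" .
  qed
qed

lemma qform_cauchy:
  fixes A :: "'n::finite \<Rightarrow> 'n \<Rightarrow> nat \<Rightarrow> rat"
  assumes p: "prime p" and "\<And>i j. pcauchy p (A i j)" and "\<And>i. pcauchy p (x i)"
  shows "pcauchy p (qform A x)"
  unfolding qform_def using assms
  by (intro cauchy_sum[OF p] cauchy_mult[OF p]) auto

lemma qform_scale:
  "qform A (\<lambda>i k. c * x i k) = (\<lambda>k. c^2 * qform A x k)"
  unfolding qform_def by (rule ext) (simp add: sum_distrib_left power2_eq_square algebra_simps)

lemma sum_if_const: "(\<Sum>l\<in>S. if P then f l else 0) = (if P then (\<Sum>l\<in>S. f l) else 0)"
  by simp

lemma qform_expand: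
  fixes A :: "'n::finite \<Rightarrow> 'n \<Rightarrow> nat \<Rightarrow> rat"
  shows "qform A (\<lambda>i k. t k * x i k + (if i = j then 1 else 0)) k =
    (t k)^2 * qform A x k + t k * ((\<Sum>i\<in>UNIV. A i j k * x i k) + (\<Sum>i\<in>UNIV. A j i k * x i k)) + A j j k"
proof -
  have "qform A (\<lambda>i k. t k * x i k + (if i = j then 1 else 0)) k =
     (\<Sum>i\<in>UNIV. \<Sum>l\<in>UNIV. (t k)^2 * (A i l k * x i k * x l k)
        + t k * (if l = j then A i l k * x i k else 0) + t k * (if i = j then A i l k * x l k else 0)
        + (if i = j then (if l = j then A i l k else 0) else 0))"
    unfolding qform_def by (intro sum.cong refl) (auto simp: algebra_simps power2_eq_square)
  also have "\<dots> = (t k)^2 * qform A x k + t k * ((\<Sum>i\<in>UNIV. A i j k * x i k) + (\<Sum>i\<in>UNIV. A j i k * x i k)) + A j j k"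
    unfolding qform_def by (simp add: sum.distrib sum_distrib_left[symmetric] distrib_left
        if_distrib[where f="\<lambda>z. t k * z"] sum_if_const cong: if_cong)
  finally show ?thesis .
qed

lemma det_col_bound:
  fixes M :: "rat^'n::finite^'n"
  assumes p: "prime p" and B: "B \<ge> 1" and hM: "\<And>r c. c \<noteq> cz \<Longrightarrow> padic_norm p (M$r$c) \<le> B"
    and hc: "\<And>r. padic_norm p (M$r$cz) \<le> \<eta>" and eta: "\<eta> \<ge> 0"
  shows "padic_norm p (det M) \<le> B ^ CARD('n) * \<eta>"
  unfolding det_def
proof (rule pnorm_sum_le[OF p])
  fix \<pi> assume "\<pi> \<in> {\<pi>. \<pi> permutes (UNIV :: 'n set)}"
  then have pp: "\<pi> permutes (UNIV :: 'n set)" by simp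
  define r0 where "r0 = inv \<pi> cz"
  have r0: "\<pi> r0 = cz" unfolding r0_def using permutes_inverses(1)[OF pp] .
  have "padic_norm p (prod (\<lambda>i. M$i$\<pi> i) UNIV) = (\<Prod>i\<in>UNIV. padic_norm p (M$i$\<pi> i))"
    by (rule pnorm_prod[OF p])
  also have "\<dots> = padic_norm p (M$r0$\<pi> r0) * (\<Prod>i\<in>UNIV - {r0}. padic_norm p (M$i$\<pi> i))"
    by (rule prod.remove) auto
  also have "\<dots> \<le> \<eta> * B ^ CARD('n)"
  proof (rule mult_mono)
    show "padic_norm p (M$r0$\<pi> r0) \<le> \<eta>" using hc r0 by simp
    show "(\<Prod>i\<in>UNIV - {r0}. padic_norm p (M$i$\<pi> i)) \<le> B ^ CARD('n)"
    proof (intro prod_le_power)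
      fix i assume "i \<in> UNIV - {r0}"
      then have "\<pi> i \<noteq> cz" using r0 permutes_inj[OF pp] by (metis DiffD2 inj_eq singletonI)
      then show "0 \<le> padic_norm p (M$i$\<pi> i) \<and> padic_norm p (M$i$\<pi> i) \<le> B"
        using hM pnorm_nonneg[of p] by auto
    qed (use B in \<open>auto simp: card_Diff_subset\<close>)
  qed (use eta in \<open>auto simp: pnorm_nonneg prod_nonneg\<close>)
  finally have 1: "padic_norm p (prod (\<lambda>i. M$i$\<pi> i) UNIV) \<le> \<eta> * B ^ CARD('n)" .
  have 2: "padic_norm p (of_int (sign \<pi>)) \<le> 1" by (rule pnorm_of_int_le1[OF p])
  have "padic_norm p (of_int (sign \<pi>) * prod (\<lambda>i. M$i$\<pi> i) UNIV) \<le> 1 * (\<eta> * B ^ CARD('n))"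
    unfolding pnorm_mult[OF p] using 1 2 by (intro mult_mono) (auto simp: pnorm_nonneg)
  then show "padic_norm p (of_int (sign \<pi>) * prod (\<lambda>i. M$i$\<pi> i) UNIV) \<le> B ^ CARD('n) * \<eta>"
    by (simp add: mult.commute)
qed (use B eta in auto)

lemma exists_w_nonnull:
  fixes A :: "'n::finite \<Rightarrow> 'n \<Rightarrow> nat \<Rightarrow> rat"
  assumes p: "prime p" and hA: "\<And>i j. ebnd p (A i j)"
    and hx: "\<And>i. pcauchy p (x i)" and x0: "\<not> pnull p (x i0)"
    and hd: "\<not> pnull p (qdet A)"
  shows "\<exists>j. \<not> pnull p (\<lambda>k. \<Sum>i\<in>UNIV. A j i k * x i k)"
proof (rule ccontr)
  assume "\<not> ?thesis"
  then have w: "\<And>j. pnull p (\<lambda>k. \<Sum>i\<in>UNIV. A j i k * x i k)" by blast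
  define M where "M k = (\<chi> r c. A r c k :: rat^'n^'n)" for k
  define xv where "xv k = (\<chi> i. x i k :: rat^'n)" for k
  define M' where "M' k = (\<chi> r c. if c = i0 then (M k *v xv k)$r else M k$r$c :: rat^'n^'n)" for k
  have cr: "det (M' k) = x i0 k * qdet A k" for k
    unfolding M'_def qdet_def M_def[symmetric] using cramer_lemma[where A="M k" and k=i0 and x="xv k"]
    by (simp add: xv_def)
  have Mv: "(M k *v xv k)$r = (\<Sum>i\<in>UNIV. A r i k * x i k)" for k r
    unfolding M_def xv_def by (simp add: matrix_vector_mult_def)
  have "pnull p (\<lambda>k. det (M' k))"
    unfolding pnull_ev
  proof (intro allI impI)
    fix e :: real assume e: "e > 0"
    obtain B0 where B0: "B0 > 0" "eventually (\<lambda>k. \<forall>ij. padic_norm p ((\<lambda>(i,j). A i j) ij k) \<le> B0) sequentially"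
      using ebnd_uniform[of p "\<lambda>(i,j). A i j"] hA by fastforce
    define B where "B = max B0 1"
    have B: "B \<ge> 1" unfolding B_def by simp
    have BA: "eventually (\<lambda>k. \<forall>i j. padic_norm p (A i j k) \<le> B) sequentially"
      using B0(2) by (rule eventually_mono) (force simp: B_def le_max_iff_disj)
    define \<eta> where "\<eta> = e / (2 * B ^ CARD('n))"
    have eta: "\<eta> > 0" using e B unfolding \<eta>_def by simp
    have W: "eventually (\<lambda>k. \<forall>r. padic_norm p (\<Sum>i\<in>UNIV. A r i k * x i k) < \<eta>) sequentially"
      using pnull_evD[OF w eta] by (simp add: eventually_all_finite)
    show "eventually (\<lambda>k. padic_norm p (det (M' k)) < e) sequentially"
      using BA W
    proof (rule eventually_elim2)
      fix k assume h1: "\<forall>i j. padic_norm p (A i j k) \<le> B"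
        and h2: "\<forall>r. padic_norm p (\<Sum>i\<in>UNIV. A r i k * x i k) < \<eta>"
      have "padic_norm p (det (M' k)) \<le> B ^ CARD('n) * \<eta>"
      proof (rule det_col_bound[OF p B, where cz = i0])
        show "padic_norm p (M' k $ r $ c) \<le> B" if "c \<noteq> i0" for r c
          using h1 that unfolding M'_def by (auto simp: M_def)
        show "padic_norm p (M' k $ r $ i0) \<le> \<eta>" for r
          using h2 unfolding M'_def Mv by (auto intro: less_imp_le)
      qed (use eta in auto)
      also have "\<dots> = e / 2" using B unfolding \<eta>_def by simp
      also have "\<dots> < e" using e by simp
      finally show "padic_norm p (det (M' k)) < e" .
    qed
  qed
  then have n1: "pnull p (\<lambda>k. x i0 k * qdet A k)" unfolding cr .
  have L: "elow p (x i0)" using cauchy_elow[OF p hx x0] .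
  then obtain d where d: "d > 0" "eventually (\<lambda>k. padic_norm p (x i0 k) \<ge> d) sequentially"
    unfolding elow_def by blast
  have "pnull p (\<lambda>k. inverse (x i0 k) * (x i0 k * qdet A k))"
    by (rule pnull_mult[OF p elow_ebnd_inverse[OF p L] n1])
  moreover have "eventually (\<lambda>k. qdet A k = inverse (x i0 k) * (x i0 k * qdet A k)) sequentially"
  proof (rule eventually_mono[OF d(2)])
    fix k assume "padic_norm p (x i0 k) \<ge> d"
    then have "x i0 k \<noteq> 0" using d(1) by auto
    then show "qdet A k = inverse (x i0 k) * (x i0 k * qdet A k)" by simp
  qed
  ultimately have "pnull p (qdet A)" by (rule pnull_eq_ev)
  then show False using hd by blast
qed

lemma target:
  fixes A :: "'n::finite \<Rightarrow> 'n \<Rightarrow> nat \<Rightarrow> rat"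
  assumes p: "prime p" and hA: "\<And>i j. pcauchy p (A i j)"
    and sym: "\<And>i j. pnull p (\<lambda>k. A i j k - A j i k)"
    and hx: "\<And>i. pcauchy p (x i)" and Qx: "pnull p (qform A x)"
    and w: "\<not> pnull p (\<lambda>k. \<Sum>i\<in>UNIV. A j i k * x i k)"
    and T: "pcauchy p T"
  shows "\<exists>v. (\<forall>i. pcauchy p (v i)) \<and> pnull p (\<lambda>k. qform A v k - T k)"
proof -
  define w where "w k = (\<Sum>i\<in>UNIV. A j i k * x i k)" for k
  define c where "c k = (\<Sum>i\<in>UNIV. A i j k * x i k) + w k" for k
  have wC: "pcauchy p w" unfolding w_def using hA hx by (intro cauchy_sum[OF p] cauchy_mult[OF p]) auto
  have cC: "pcauchy p c" unfolding c_def using hA hx wC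
    by (intro cauchy_add[OF p] cauchy_sum[OF p] cauchy_mult[OF p]) auto
  have d: "pnull p (\<lambda>k. c k - 2 * w k)"
  proof -
    have "pnull p (\<lambda>k. \<Sum>i\<in>UNIV. (A i j k - A j i k) * x i k)"
      using sym hx by (intro pnull_sum[OF p] pnull_mult'[OF p] cauchy_ebnd[OF p]) auto
    moreover have "(\<lambda>k. \<Sum>i\<in>UNIV. (A i j k - A j i k) * x i k) = (\<lambda>k. c k - 2 * w k)"
      unfolding c_def w_def by (auto simp: algebra_simps sum_subtractf[symmetric] sum.distrib)
    ultimately show ?thesis by simp
  qed
  have cnn: "\<not> pnull p c"
  proof
    assume "pnull p c"
    then have "pnull p (\<lambda>k. c k - (c k - 2 * w k))" using d by (rule pnull_diff[OF p])
    then have "pnull p (\<lambda>k. 1/2 * (c k - (c k - 2 * w k)))" by (rule pnull_mult[OF p ebnd_const])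
    then have "pnull p w" by simp
    then show False using w unfolding w_def by simp
  qed
  have cL: "elow p c" using cauchy_elow[OF p cC cnn] .
  define t where "t k = (T k - A j j k) * inverse (c k)" for k
  have tC: "pcauchy p t" unfolding t_def
    using T hA cC cL by (intro cauchy_mult[OF p] cauchy_diff[OF p] cauchy_inverse[OF p]) auto
  define v where "v i k = t k * x i k + (if i = j then 1 else 0)" for i k
  have vC: "pcauchy p (v i)" for i unfolding v_def
    using tC hx by (intro cauchy_add[OF p] cauchy_mult[OF p]) (auto simp: cauchy_const)
  obtain dd where dd: "dd > 0" "eventually (\<lambda>k. padic_norm p (c k) \<ge> dd) sequentially"
    using cL unfolding elow_def by blast
  have "pnull p (\<lambda>k. (t k * t k) * qform A x k)"
    using tC Qx by (intro pnull_mult[OF p] ebnd_mult[OF p] cauchy_ebnd[OF p]) auto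
  moreover have "eventually (\<lambda>k. qform A v k - T k = (t k * t k) * qform A x k) sequentially"
  proof (rule eventually_mono[OF dd(2)])
    fix k assume "padic_norm p (c k) \<ge> dd"
    then have ck: "c k \<noteq> 0" using dd(1) by auto
    have "qform A v k = (t k)^2 * qform A x k + t k * c k + A j j k"
      unfolding v_def qform_expand c_def w_def by simp
    also have "t k * c k = T k - A j j k" unfolding t_def using ck by simp
    finally show "qform A v k - T k = (t k * t k) * qform A x k" by (simp add: power2_eq_square)
  qed
  ultimately have "pnull p (\<lambda>k. qform A v k - T k)" by (rule pnull_eq_ev)
  then show ?thesis using vC by blast
qed

lemma pow_small:
  assumes p: "prime p" and e: "e > 0" shows "\<exists>M. (1 / real p) ^ M < e"
proof -
  have "1 / real p < 1" using prime_gt_1_nat[OF p] by simp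
  then show ?thesis using real_arch_pow_inv[OF e] by blast
qed

lemma int_approx_seq:
  fixes v :: "'i::finite \<Rightarrow> nat \<Rightarrow> rat"
  assumes p: "prime p" and hv: "\<And>i. pcauchy p (v i)"
  shows "\<exists>M a. (\<forall>i. pcauchy p (a i) \<and> (\<forall>k. a i k \<in> \<int>))
            \<and> (\<forall>i. pnull p (\<lambda>k. of_nat p ^ M * v i k - a i k))"
proof -
  obtain B where B: "B > 0" "eventually (\<lambda>k. \<forall>i. padic_norm p (v i k) \<le> B) sequentially"
    using ebnd_uniform[of p v] cauchy_ebnd[OF p hv] by blast
  obtain N0 where N0: "\<And>k i. k \<ge> N0 \<Longrightarrow> padic_norm p (v i k) \<le> B"
    using B(2) unfolding eventually_sequentially by blast
  obtain M where M: "(1 / real p) ^ M < 1 / B" using pow_small[OF p, of "1 / B"] B(1) by auto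
  define lam :: rat where "lam = of_nat p ^ M"
  have nl: "padic_norm p lam = (1 / real p) ^ M" unfolding lam_def by (simp add: pnorm_power[OF p] pnorm_p[OF p])
  have le1: "padic_norm p (lam * v i k) \<le> 1" if "k \<ge> N0" for i k
  proof -
    have "padic_norm p (lam * v i k) = (1 / real p) ^ M * padic_norm p (v i k)"
      by (simp add: pnorm_mult[OF p] nl)
    also have "\<dots> \<le> (1 / real p) ^ M * B" using N0[OF that] by (intro mult_left_mono) auto
    also have "\<dots> \<le> 1" using M B by (simp add: field_simps)
    finally show ?thesis .
  qed
  define a :: "'i \<Rightarrow> nat \<Rightarrow> rat" where "a i k = (if k \<ge> N0 then of_int (SOME n. padic_norm p (lam * v i k - of_int n) \<le> (1 / real p) ^ k) else 0)" for i k
  have aZ: "a i k \<in> \<int>" for i k unfolding a_def by auto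
  have aclose: "padic_norm p (lam * v i k - a i k) \<le> (1 / real p) ^ k" if "k \<ge> N0" for i k
  proof -
    have "\<exists>n. padic_norm p (lam * v i k - of_int n) \<le> (1 / real p) ^ k"
      using int_approx[OF p le1[OF that]] .
    then show ?thesis unfolding a_def using that by (auto intro: someI_ex)
  qed
  have an: "pnull p (\<lambda>k. lam * v i k - a i k)" for i
    unfolding pnull_def
  proof (intro allI impI)
    fix e :: real assume e: "e > 0"
    obtain K where K: "(1 / real p) ^ K < e" using pow_small[OF p e] by blast
    have "\<forall>k\<ge>max N0 K. padic_norm p (lam * v i k - a i k) < e"
    proof (intro allI impI)
      fix k assume k: "k \<ge> max N0 K"
      have "padic_norm p (lam * v i k - a i k) \<le> (1 / real p) ^ k" using aclose k by simp
      also have "\<dots> \<le> (1 / real p) ^ K" using k prime_gt_1_nat[OF p] by (intro power_decreasing) auto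
      finally show "padic_norm p (lam * v i k - a i k) < e" using K by simp
    qed
    then show "\<exists>N. \<forall>k\<ge>N. padic_norm p (lam * v i k - a i k) < e" by blast
  qed
  have aC: "pcauchy p (a i)" for i
    using cauchy_mult[OF p cauchy_const hv] an by (rule cauchy_perturb[OF p])
  show ?thesis using aC aZ an unfolding lam_def by blast
qed

lemma core:
  fixes A :: "'n::finite \<Rightarrow> 'n \<Rightarrow> nat \<Rightarrow> rat"
  assumes p: "prime p" and qf: "is_qform p A" and ns: "nonsingular p A" and iso: "isotropic p A"
    and q: "pcauchy p q"
  shows "\<exists>a b L. (\<forall>i. a i \<in> Zp p) \<and> (\<forall>i. b i \<in> Zp p) \<and> L \<noteq> 0
     \<and> pnull p (\<lambda>k. qform A a k - L * q k) \<and> pnull p (\<lambda>k. qform A b k - L)"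
proof -
  have hA: "\<And>i j. pcauchy p (A i j)" using qf unfolding is_qform_def Qp_def by auto
  have sym: "\<And>i j. pnull p (\<lambda>k. A i j k - A j i k)" using qf unfolding is_qform_def peq_def by auto
  obtain x where hx: "\<And>i. pcauchy p (x i)" and x0: "\<exists>i. \<not> pnull p (x i)" and Qx: "pnull p (qform A x)"
    using iso unfolding isotropic_def Qp_def by auto
  obtain i0 where i0: "\<not> pnull p (x i0)" using x0 by blast
  have hd: "\<not> pnull p (qdet A)" using ns unfolding nonsingular_def .
  obtain j where j: "\<not> pnull p (\<lambda>k. \<Sum>i\<in>UNIV. A j i k * x i k)"
    using exists_w_nonnull[of p A x i0] p cauchy_ebnd[OF p hA] hx i0 hd by blast
  obtain va where va: "\<And>i. pcauchy p (va i)" "pnull p (\<lambda>k. qform A va k - q k)"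
    using target[of p A x j q] p hA sym hx Qx j q by blast
  obtain vb where vb: "\<And>i. pcauchy p (vb i)" "pnull p (\<lambda>k. qform A vb k - 1)"
    using target[of p A x j "\<lambda>k. 1"] p hA sym hx Qx j cauchy_const[of p 1] by blast
  define V where "V = (\<lambda>(z::bool, i). if z then va i else vb i)"
  have VC: "pcauchy p (V zi)" for zi unfolding V_def using va vb by (cases zi) auto
  obtain M a' where a': "\<And>zi. pcauchy p (a' zi)" "\<And>zi k. a' zi k \<in> \<int>"
     "\<And>zi. pnull p (\<lambda>k. of_nat p ^ M * V zi k - a' zi k)"
    using int_approx_seq[of p V] p VC by blast
  define lam :: rat where "lam = of_nat p ^ M"
  define a where "a i = a' (True, i)" for i
  define b where "b i = a' (False, i)" for i
  have lam0: "lam \<noteq> 0" unfolding lam_def using prime_gt_0_nat[OF p] by simp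
  have aZ: "a i \<in> Zp p" "b i \<in> Zp p" for i
    unfolding Zp_def a_def b_def using a' by auto
  have gen: "pnull p (\<lambda>k. qform A c k - lam^2 * T k)"
    if cC: "\<And>i. pcauchy p (c i)" and vC: "\<And>i. pcauchy p (v i)"
      and cv: "\<And>i. pnull p (\<lambda>k. lam * v i k - c i k)" and vT: "pnull p (\<lambda>k. qform A v k - T k)"
    for c v and T :: "nat \<Rightarrow> rat"
  proof -
    have 1: "pnull p (\<lambda>k. qform A c k - qform A (\<lambda>i k. lam * v i k) k)"
    proof (rule qform_null_diff[OF p])
      show "ebnd p (A i j)" for i j using cauchy_ebnd[OF p hA] .
      show "ebnd p (c i)" for i using cauchy_ebnd[OF p cC] .
      show "ebnd p (\<lambda>k. lam * v i k)" for i using cauchy_ebnd[OF p cauchy_mult[OF p cauchy_const vC]] .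
      show "pnull p (\<lambda>k. c i k - lam * v i k)" for i using pnull_minus[OF cv[of i]] by simp
    qed
    have 2: "pnull p (\<lambda>k. lam^2 * (qform A v k - T k))" by (rule pnull_mult[OF p ebnd_const vT])
    have "pnull p (\<lambda>k. (qform A c k - qform A (\<lambda>i k. lam * v i k) k) + lam^2 * (qform A v k - T k))"
      using 1 2 by (rule pnull_add[OF p])
    then show ?thesis unfolding qform_scale by (simp add: algebra_simps)
  qed
  have na: "pnull p (\<lambda>k. lam * va i k - a i k)" for i
    using a'(3)[of "(True,i)"] unfolding V_def a_def lam_def by simp
  have nb: "pnull p (\<lambda>k. lam * vb i k - b i k)" for i
    using a'(3)[of "(False,i)"] unfolding V_def b_def lam_def by simp
  have ca: "pcauchy p (a i)" "pcauchy p (b i)" for i unfolding a_def b_def using a'(1) by auto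
  have "pnull p (\<lambda>k. qform A a k - lam^2 * q k)"
    using gen[of a va q] ca na va by blast
  moreover have "pnull p (\<lambda>k. qform A b k - lam^2 * 1)"
    using gen[of b vb "\<lambda>k. 1"] ca nb vb by blast
  ultimately show ?thesis using aZ lam0 by (intro exI[of _ a] exI[of _ b] exI[of _ "lam^2"]) auto
qed

lemma part1:
  fixes A :: "'n::finite \<Rightarrow> 'n \<Rightarrow> nat \<Rightarrow> rat"
  assumes p: "prime p" and qf: "is_qform p A" and ns: "nonsingular p A" and iso: "isotropic p A"
    and q: "q \<in> Qp p"
  shows "\<exists>a b. (\<forall>i. a i \<in> Zp p) \<and> (\<forall>i. b i \<in> Zp p)
            \<and> \<not> pnull p (qform A b) \<and> peq p q (pdiv (qform A a) (qform A b))"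
proof -
  have qC: "pcauchy p q" using q unfolding Qp_def by simp
  obtain a b L where ab: "\<forall>i. a i \<in> Zp p" "\<forall>i. b i \<in> Zp p" and L: "L \<noteq> 0"
    and na: "pnull p (\<lambda>k. qform A a k - L * q k)" and nb: "pnull p (\<lambda>k. qform A b k - L)"
    using core[OF p qf ns iso qC] by blast
  have bL: "elow p (qform A b)"
    using elow_perturb[OF p elow_const[OF p L]] pnull_minus[OF nb] by simp
  have "pnull p (\<lambda>k. inverse (qform A b k) * (q k * (qform A b k - L) - (qform A a k - L * q k)))"
  proof -
    have 1: "pnull p (\<lambda>k. q k * (qform A b k - L))" by (rule pnull_mult[OF p cauchy_ebnd[OF p qC] nb])
    have 2: "pnull p (\<lambda>k. q k * (qform A b k - L) - (qform A a k - L * q k))"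
      by (rule pnull_diff[OF p 1 na])
    show ?thesis by (rule pnull_mult[OF p elow_ebnd_inverse[OF p bL] 2])
  qed
  moreover have "eventually (\<lambda>k. q k - pdiv (qform A a) (qform A b) k =
      inverse (qform A b k) * (q k * (qform A b k - L) - (qform A a k - L * q k))) sequentially"
  proof -
    obtain d where d: "d > 0" "eventually (\<lambda>k. padic_norm p (qform A b k) \<ge> d) sequentially"
      using bL unfolding elow_def by blast
    show ?thesis
    proof (rule eventually_mono[OF d(2)])
      fix k assume "padic_norm p (qform A b k) \<ge> d"
      then have "qform A b k \<noteq> 0" using d(1) by auto
      then show "q k - pdiv (qform A a) (qform A b) k =
        inverse (qform A b k) * (q k * (qform A b k - L) - (qform A a k - L * q k))"
        unfolding pdiv_def by (simp add: field_simps)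
    qed
  qed
  ultimately have "pnull p (\<lambda>k. q k - pdiv (qform A a) (qform A b) k)" by (rule pnull_eq_ev)
  then show ?thesis using ab elow_not_pnull[OF bL] unfolding peq_def by blast
qed

lemma cauchy_uniform:
  fixes X :: "'i::finite \<Rightarrow> nat \<Rightarrow> rat"
  assumes "\<And>i. pcauchy p (X i)" and e: "e > 0"
  shows "\<exists>N. \<forall>i m k. m \<ge> N \<longrightarrow> k \<ge> N \<longrightarrow> padic_norm p (X i m - X i k) < e"
proof -
  have "\<forall>i. \<exists>N. \<forall>m\<ge>N. \<forall>k\<ge>N. padic_norm p (X i m - X i k) < e"
    using assms unfolding pcauchy_def by blast
  then obtain Nf where Nf: "\<And>i m k. m \<ge> Nf i \<Longrightarrow> k \<ge> Nf i \<Longrightarrow> padic_norm p (X i m - X i k) < e"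
    by metis
  define N where "N = Max (range Nf)"
  have "Nf i \<le> N" for i unfolding N_def by (rule Max_ge) auto
  then show ?thesis using Nf by (meson order_trans)
qed

lemma part2:
  fixes A :: "'n::finite \<Rightarrow> 'n \<Rightarrow> nat \<Rightarrow> rat" and a b :: "'n \<Rightarrow> nat \<Rightarrow> rat"
  assumes p: "prime p" and hA: "\<And>i j. pcauchy p (A i j)"
    and aZ: "\<And>i. a i \<in> Zp p" and bZ: "\<And>i. b i \<in> Zp p" and L: "L \<noteq> 0"
    and na: "pnull p (\<lambda>k. qform A a k - L * q k)" and nb: "pnull p (\<lambda>k. qform A b k - L)"
    and qC: "pcauchy p q" and e: "e > 0"
  shows "\<exists>a0 b0 :: 'n \<Rightarrow> int. \<not> pnull p (qform A (\<lambda>i k. of_int (b0 i)))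
      \<and> Qp_norm p (\<lambda>k. q k - pdiv (qform A (\<lambda>i k. of_int (a0 i))) (qform A (\<lambda>i k. of_int (b0 i))) k) < e"
proof -
  define l where "l = padic_norm p L"
  have l: "l > 0" unfolding l_def using pnorm_pos[OF p L] .
  define E where "E = e / 2"
  have E: "E > 0" "E < e" unfolding E_def using e by auto
  obtain Bq where Bq: "Bq > 0" "eventually (\<lambda>k. padic_norm p (q k) \<le> Bq) sequentially"
    using ebnd_pos[OF cauchy_ebnd[OF p qC]] by blast
  obtain BA0 where BA0: "BA0 > 0" "eventually (\<lambda>k. \<forall>ij. padic_norm p ((\<lambda>(i,j). A i j) ij k) \<le> BA0) sequentially"
    using ebnd_uniform[of p "\<lambda>(i,j). A i j"] cauchy_ebnd[OF p hA] by fastforce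
  have BA: "eventually (\<lambda>k. \<forall>i j. padic_norm p (A i j k) \<le> BA0) sequentially"
    using BA0(2) by (rule eventually_mono) auto
  define \<delta> where "\<delta> = min l (min (E * l / Bq) (E * l))"
  have dpos: "\<delta> > 0" unfolding \<delta>_def using l E Bq by auto
  have dl: "\<delta> \<le> l" and dq0: "\<delta> \<le> E * l / Bq" and de: "\<delta> \<le> E * l"
    unfolding \<delta>_def by auto
  have dq: "Bq * \<delta> \<le> E * l" using dq0 Bq(1) by (simp add: pos_le_divide_eq mult.commute)
  define \<eta> where "\<eta> = \<delta> / (2 * BA0)"
  have eta: "\<eta> > 0" unfolding \<eta>_def using dpos BA0 by simp
  have aC: "pcauchy p (a i)" and aI: "a i k \<in> \<int>" for i k using aZ[of i] unfolding Zp_def by auto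
  have bC: "pcauchy p (b i)" and bI: "b i k \<in> \<int>" for i k using bZ[of i] unfolding Zp_def by auto
  obtain Na where Na: "\<And>i m k. m \<ge> Na \<Longrightarrow> k \<ge> Na \<Longrightarrow> padic_norm p (a i m - a i k) < \<eta>"
    using cauchy_uniform[of p a, OF aC eta] by blast
  obtain Nb where Nb: "\<And>i m k. m \<ge> Nb \<Longrightarrow> k \<ge> Nb \<Longrightarrow> padic_norm p (b i m - b i k) < \<eta>"
    using cauchy_uniform[of p b, OF bC eta] by blast
  define K where "K = max Na Nb"
  have "\<forall>i. \<exists>z. a i K = of_int z" using aI by (metis Ints_cases)
  then obtain a0 where a0: "\<And>i. a i K = of_int (a0 i)" by metis
  have "\<forall>i. \<exists>z. b i K = of_int z" using bI by (metis Ints_cases)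
  then obtain b0 where b0: "\<And>i. b i K = of_int (b0 i)" by metis
  define ca :: "'n \<Rightarrow> nat \<Rightarrow> rat" where "ca = (\<lambda>i k. of_int (a0 i))"
  define cb :: "'n \<Rightarrow> nat \<Rightarrow> rat" where "cb = (\<lambda>i k. of_int (b0 i))"
  have close: "padic_norm p (qform A x k - qform A c k) < \<delta>"
    if hAk: "\<forall>i j. padic_norm p (A i j k) \<le> BA0" and xI: "\<And>i k. x i k \<in> \<int>" and cI: "\<And>i k. c i k \<in> \<int>"
      and xc: "\<And>i. padic_norm p (x i k - c i k) < \<eta>"
    for x c :: "'n \<Rightarrow> nat \<Rightarrow> rat" and k
  proof -
    have "padic_norm p (qform A x k - qform A c k) \<le> BA0 * (1 * \<eta>)"
      using hAk pnorm_Ints_le1[OF p xI] pnorm_Ints_le1[OF p cI] xc BA0(1) eta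
      by (intro qform_diff_le[OF p]) (auto intro: less_imp_le)
    also have "\<dots> = \<delta> / 2" unfolding \<eta>_def using BA0(1) by simp
    also have "\<dots> < \<delta>" using dpos by simp
    finally show ?thesis .
  qed
  have caI: "ca i k \<in> \<int>" "cb i k \<in> \<int>" for i k unfolding ca_def cb_def by auto
  have ev: "eventually (\<lambda>k. padic_norm p (qform A ca k - L * q k) < \<delta>
      \<and> padic_norm p (qform A cb k - L) < \<delta>) sequentially"
  proof -
    have "eventually (\<lambda>k. k \<ge> K \<and> (\<forall>i j. padic_norm p (A i j k) \<le> BA0)
       \<and> padic_norm p (qform A a k - L * q k) < \<delta> \<and> padic_norm p (qform A b k - L) < \<delta>) sequentially"
      using eventually_ge_at_top[of K] BA pnull_evD[OF na dpos] pnull_evD[OF nb dpos]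
      by (intro eventually_conj) auto
    then show ?thesis
    proof (rule eventually_mono)
      fix k assume h: "k \<ge> K \<and> (\<forall>i j. padic_norm p (A i j k) \<le> BA0)
       \<and> padic_norm p (qform A a k - L * q k) < \<delta> \<and> padic_norm p (qform A b k - L) < \<delta>"
      have c1: "padic_norm p (qform A a k - qform A ca k) < \<delta>"
        using h aI caI Na[of k K] a0 unfolding K_def ca_def by (intro close) auto
      have c2: "padic_norm p (qform A b k - qform A cb k) < \<delta>"
        using h bI caI Nb[of k K] b0 unfolding K_def cb_def by (intro close) auto
      have "padic_norm p ((qform A a k - L * q k) - (qform A a k - qform A ca k)) < \<delta>"
        using pnorm_diff_le[OF p, of "qform A a k - L * q k" "qform A a k - qform A ca k"] h c1 by linarith
      moreover have "padic_norm p ((qform A b k - L) - (qform A b k - qform A cb k)) < \<delta>"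
        using pnorm_diff_le[OF p, of "qform A b k - L" "qform A b k - qform A cb k"] h c2 by linarith
      ultimately show "padic_norm p (qform A ca k - L * q k) < \<delta> \<and> padic_norm p (qform A cb k - L) < \<delta>"
        by (simp add: algebra_simps)
    qed
  qed
  have low: "eventually (\<lambda>k. padic_norm p (qform A cb k) \<ge> l) sequentially"
    using ev
  proof (rule eventually_mono)
    fix k assume "padic_norm p (qform A ca k - L * q k) < \<delta> \<and> padic_norm p (qform A cb k - L) < \<delta>"
    then have "padic_norm p (L - qform A cb k) < padic_norm p L"
      using dl pnorm_commute[of p L "qform A cb k"] unfolding l_def by linarith
    then show "padic_norm p (qform A cb k) \<ge> l" unfolding l_def by (rule pnorm_ge[OF p])
  qed
  have cbL: "elow p (qform A cb)" unfolding elow_def using low l by blast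
  define X where "X k = q k - pdiv (qform A ca) (qform A cb) k" for k
  have XC: "pcauchy p X"
  proof -
    have QaC: "pcauchy p (qform A ca)" "pcauchy p (qform A cb)"
      using hA unfolding ca_def cb_def by (auto intro!: qform_cauchy[OF p] simp: cauchy_const)
    have "pcauchy p (\<lambda>k. q k - qform A ca k * inverse (qform A cb k))"
      using qC QaC cbL by (intro cauchy_diff[OF p] cauchy_mult[OF p] cauchy_inverse[OF p]) auto
    then show ?thesis unfolding X_def pdiv_def by (simp add: divide_inverse)
  qed
  have "eventually (\<lambda>k. padic_norm p (X k) \<le> E) sequentially"
    using eventually_conj[OF ev eventually_conj[OF low Bq(2)]]
  proof (rule eventually_mono)
    fix k assume hh: "(padic_norm p (qform A ca k - L * q k) < \<delta> \<and> padic_norm p (qform A cb k - L) < \<delta>)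
      \<and> (padic_norm p (qform A cb k) \<ge> l \<and> padic_norm p (q k) \<le> Bq)"
    then have h: "padic_norm p (qform A ca k - L * q k) < \<delta> \<and> padic_norm p (qform A cb k - L) < \<delta>"
      and lo: "padic_norm p (qform A cb k) \<ge> l" and hq: "padic_norm p (q k) \<le> Bq" by auto
    have nz: "qform A cb k \<noteq> 0" using lo l by auto
    have eq: "X k = (q k * (qform A cb k - L) - (qform A ca k - L * q k)) / qform A cb k"
      unfolding X_def pdiv_def using nz by (simp add: field_simps)
    have n1: "padic_norm p (q k * (qform A cb k - L)) \<le> E * l"
    proof -
      have "padic_norm p (q k * (qform A cb k - L)) \<le> Bq * \<delta>"
        unfolding pnorm_mult[OF p] using hq h Bq(1) by (intro mult_mono) (auto simp: pnorm_nonneg)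
      then show ?thesis using dq by linarith
    qed
    have n2: "padic_norm p (q k * (qform A cb k - L) - (qform A ca k - L * q k)) \<le> E * l"
      using pnorm_diff_le[OF p, of "q k * (qform A cb k - L)" "qform A ca k - L * q k"] n1 h de by linarith
    have "padic_norm p (X k) = padic_norm p (q k * (qform A cb k - L) - (qform A ca k - L * q k)) / padic_norm p (qform A cb k)"
      unfolding eq by (rule pnorm_divide[OF p])
    also have "\<dots> \<le> (E * l) / l"
      using n2 lo l E by (intro frac_le) (auto simp: pnorm_nonneg)
    also have "\<dots> = E" using l by simp
    finally show "padic_norm p (X k) \<le> E" .
  qed
  then obtain N where N: "\<And>k. k \<ge> N \<Longrightarrow> padic_norm p (X k) \<le> E"
    unfolding eventually_sequentially by blast
  have "Qp_norm p X \<le> E" using Qp_norm_le[OF p XC N] by blast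
  then have "Qp_norm p X < e" using E by simp
  moreover have "\<not> pnull p (qform A cb)" using elow_not_pnull[OF cbL] .
  ultimately show ?thesis unfolding X_def ca_def cb_def by blast
qed

theorem corollary1:
  fixes p :: nat and A :: "'n::finite \<Rightarrow> 'n \<Rightarrow> nat \<Rightarrow> rat"
  assumes "prime p"
    and "is_qform p A"
    and "nonsingular p A"
    and "isotropic p A"
  shows "(\<forall>q\<in>Qp p. \<exists>a b. (\<forall>i. a i \<in> Zp p) \<and> (\<forall>i. b i \<in> Zp p)
            \<and> \<not> pnull p (qform A b) \<and> peq p q (pdiv (qform A a) (qform A b)))
     \<and> (\<forall>q\<in>Qp p. \<forall>e>0. \<exists>a b :: 'n \<Rightarrow> int.
            \<not> pnull p (qform A (\<lambda>i k. of_int (b i)))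
            \<and> Qp_norm p (\<lambda>k. q k - pdiv (qform A (\<lambda>i k. of_int (a i))) (qform A (\<lambda>i k. of_int (b i))) k) < e)"
proof (intro conjI ballI allI impI)
  fix q assume q: "q \<in> Qp p"
  show "\<exists>a b. (\<forall>i. a i \<in> Zp p) \<and> (\<forall>i. b i \<in> Zp p)
            \<and> \<not> pnull p (qform A b) \<and> peq p q (pdiv (qform A a) (qform A b))"
    by (rule part1[OF assms q])
next
  fix q and e :: real assume q: "q \<in> Qp p" and e: "e > 0"
  have qC: "pcauchy p q" using q unfolding Qp_def by simp
  have hA: "\<And>i j. pcauchy p (A i j)" using assms(2) unfolding is_qform_def Qp_def by auto
  obtain a b L where ab: "\<forall>i. a i \<in> Zp p" "\<forall>i. b i \<in> Zp p" and L: "L \<noteq> 0"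
    and na: "pnull p (\<lambda>k. qform A a k - L * q k)" and nb: "pnull p (\<lambda>k. qform A b k - L)"
    using core[OF assms qC] by blast
  show "\<exists>a b :: 'n \<Rightarrow> int.
            \<not> pnull p (qform A (\<lambda>i k. of_int (b i)))
            \<and> Qp_norm p (\<lambda>k. q k - pdiv (qform A (\<lambda>i k. of_int (a i))) (qform A (\<lambda>i k. of_int (b i))) k) < e"
    using part2[OF assms(1) hA _ _ L na nb qC e] ab by blast
qed

end
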